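(* Let $f\colon X\to X$ be a piecewise $\lambda$-contraction and $x_0\in X$. If $\Omega(f)\cap S(f)=\emptyset$, then $f$ is asymptotically periodic on $Z(f)$.
   Context: $(X,d)$ is a compact metric space whose open balls are connected, with $\mathrm{diam}(X)>0$, and $\lambda\in(0,1)$. A piecewise $\lambda$-contraction $f$: there exist $N\in\mathbb{N}$, open connected pairwise disjoint $A_1,\dots,A_N\subset X$ with dense union $X'$, and bi-Lipschitz $\varphi_i\colon X\to X$ with Lipschitz constant $\le\lambda$, $f|_{A_i}=\varphi_i|_{A_i}$; $S(f)=X\setminus X'$. $x$ is regular of order $n$ if $f^j(x)\notin S(f)$ for $0\le j<n$, regular if for all $n$; $Z(f)$ is the set of regular points. $\mathcal{I}_n(f)$ is the set of tuples $(i_0,\dots,i_{n-1})$ such that some regular point $x$ of order $n$ has $f^j(x)\in A_{i_j}$ for $0\le j<n$. For $\alpha=(i_0,\dots,i_{n-1})$, $\varphi^\alpha=\varphi_{i_{n-1}}\circ\cdots\circ\varphi_{i_0}$ and $\Omega(f)=\bigcap_{m\ge1}\overline{\bigcup_{n\ge m}\{\varphi^\alpha(x_0):\alpha\in\mathcal{I}_n(f)\}}$. $f$ is asymptotically periodic on $Y$ if $\bigcup_{x\in Y}\omega(f,x)$ is a union of finitely many periodic orbits, where $\omega(f,x)=\bigcap_{m\ge1}\overline{\bigcup_{n\ge m}\{f^n(x)\}}$. *)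

theory Defs
  imports "HOL-Analysis.Analysis"
begin

definition good_space :: "'a::metric_space set \<Rightarrow> bool" where
  "good_space X \<longleftrightarrow> compact X \<and>
     (\<forall>x\<in>X. \<forall>r>0. connected (ball x r \<inter> X)) \<and> diameter X > 0"

definition piecewise_contraction ::
  "'a::metric_space set \<Rightarrow> real \<Rightarrow> nat \<Rightarrow> (nat \<Rightarrow> 'a set) \<Rightarrow> (nat \<Rightarrow> 'a \<Rightarrow> 'a)
     \<Rightarrow> ('a \<Rightarrow> 'a) \<Rightarrow> bool" where
  "piecewise_contraction X lam N A \<phi> f \<longleftrightarrow>
     f ` X \<subseteq> X \<and>
     (\<forall>i<N. openin (top_of_set X) (A i) \<and> connected (A i)) \<and>
     (\<forall>i<N. \<forall>j<N. i \<noteq> j \<longrightarrow> A i \<inter> A j = {}) \<and>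
     X \<subseteq> closure (\<Union>i<N. A i) \<and>
     (\<forall>i<N. \<phi> i ` X \<subseteq> X \<and> lam-lipschitz_on X (\<phi> i) \<and>
        (\<exists>c>0. \<forall>x\<in>X. \<forall>y\<in>X. c * dist x y \<le> dist (\<phi> i x) (\<phi> i y))) \<and>
     (\<forall>i<N. \<forall>x\<in>A i. f x = \<phi> i x)"

definition sing_set :: "'a set \<Rightarrow> nat \<Rightarrow> (nat \<Rightarrow> 'a set) \<Rightarrow> 'a set" where
  "sing_set X N A = X - (\<Union>i<N. A i)"

definition regular_of_order ::
  "'a set \<Rightarrow> nat \<Rightarrow> (nat \<Rightarrow> 'a set) \<Rightarrow> ('a \<Rightarrow> 'a) \<Rightarrow> nat \<Rightarrow> 'a \<Rightarrow> bool" where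
  "regular_of_order X N A f n x \<longleftrightarrow>
     x \<in> X \<and> (\<forall>j<n. (f ^^ j) x \<notin> sing_set X N A)"

definition regular_set :: "'a set \<Rightarrow> nat \<Rightarrow> (nat \<Rightarrow> 'a set) \<Rightarrow> ('a \<Rightarrow> 'a) \<Rightarrow> 'a set" where
  "regular_set X N A f = {x. \<forall>n. regular_of_order X N A f n x}"

definition itin :: "'a set \<Rightarrow> nat \<Rightarrow> (nat \<Rightarrow> 'a set) \<Rightarrow> ('a \<Rightarrow> 'a) \<Rightarrow> nat \<Rightarrow> nat list set" where
  "itin X N A f n = {\<alpha>. length \<alpha> = n \<and> set \<alpha> \<subseteq> {..<N} \<and>
     (\<exists>x. regular_of_order X N A f n x \<and> (\<forall>j<n. (f ^^ j) x \<in> A (\<alpha> ! j)))}"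

text \<open>phi^alpha = phi_{i_{n-1}} o ... o phi_{i_0}.\<close>
definition comp_word :: "(nat \<Rightarrow> 'a \<Rightarrow> 'a) \<Rightarrow> nat list \<Rightarrow> 'a \<Rightarrow> 'a" where
  "comp_word \<phi> \<alpha> x = foldl (\<lambda>y i. \<phi> i y) x \<alpha>"

definition Omega_set ::
  "'a::topological_space set \<Rightarrow> nat \<Rightarrow> (nat \<Rightarrow> 'a set) \<Rightarrow> (nat \<Rightarrow> 'a \<Rightarrow> 'a) \<Rightarrow> ('a \<Rightarrow> 'a) \<Rightarrow> 'a \<Rightarrow> 'a set" where
  "Omega_set X N A \<phi> f x0 =
     (\<Inter>m\<in>{1..}. closure (\<Union>n\<in>{m..}. {comp_word \<phi> \<alpha> x0 | \<alpha>. \<alpha> \<in> itin X N A f n}))"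

definition omega_limit :: "('a::topological_space \<Rightarrow> 'a) \<Rightarrow> 'a \<Rightarrow> 'a set" where
  "omega_limit f x = (\<Inter>m\<in>{1..}. closure (\<Union>n\<in>{m..}. {(f ^^ n) x}))"

definition periodic_point :: "('a \<Rightarrow> 'a) \<Rightarrow> 'a \<Rightarrow> bool" where
  "periodic_point f p \<longleftrightarrow> (\<exists>n\<ge>1. (f ^^ n) p = p)"

definition orbit :: "('a \<Rightarrow> 'a) \<Rightarrow> 'a \<Rightarrow> 'a set" where
  "orbit f p = {(f ^^ k) p | k. True}"

definition asymptotically_periodic_on :: "('a::topological_space \<Rightarrow> 'a) \<Rightarrow> 'a set \<Rightarrow> bool" where
  "asymptotically_periodic_on f Y \<longleftrightarrow>
     (\<exists>P. finite P \<and> (\<forall>p\<in>P. periodic_point f p) \<and>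
        (\<Union>x\<in>Y. omega_limit f x) = (\<Union>p\<in>P. orbit f p))"

end

theory Submission
  imports Defs
begin


lemma funpow_add_apply: "(f ^^ (m + n)) x = (f ^^ m) ((f ^^ n) x)"
  by (simp add: funpow_add)

lemma funpow_in: "f ` X \<subseteq> X \<Longrightarrow> x \<in> X \<Longrightarrow> (f ^^ n) x \<in> X"
  by (induction n) auto

lemma funpow_period:
  assumes "(f ^^ p) y = y"
  shows "(f ^^ (k*p + j)) y = (f ^^ j) y"
proof (induction k)
  case 0 show ?case by simp
next
  case (Suc k)
  have "(f ^^ (Suc k * p + j)) y = (f ^^ ((k*p+j) + p)) y" by (simp add: algebra_simps)
  also have "\<dots> = (f ^^ (k*p+j)) ((f ^^ p) y)" by (rule funpow_add_apply)
  also have "\<dots> = (f ^^ j) y" using assms Suc by simp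
  finally show ?case .
qed

lemma orbit_finite:
  assumes "p \<ge> 1" "(f ^^ p) y = y"
  shows "orbit f y = (\<lambda>k. (f ^^ k) y) ` {..<p}" "finite (orbit f y)"
proof -
  show "orbit f y = (\<lambda>k. (f ^^ k) y) ` {..<p}"
  proof
    show "orbit f y \<subseteq> (\<lambda>k. (f ^^ k) y) ` {..<p}"
    proof
      fix z assume "z \<in> orbit f y"
      then obtain k where z: "z = (f ^^ k) y" unfolding orbit_def by auto
      have "k = (k div p) * p + k mod p" by simp
      then have "z = (f ^^ (k mod p)) y" using z funpow_period[OF assms(2)] by metis
      moreover have "k mod p < p" using assms(1) by simp
      ultimately show "z \<in> (\<lambda>k. (f ^^ k) y) ` {..<p}" by blast
    qed
  qed (auto simp: orbit_def)
  then show "finite (orbit f y)" by simp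
qed

lemma pow_small:
  fixes lam :: real
  assumes "0 \<le> lam" "lam < 1" "e > 0"
  shows "\<exists>K. \<forall>k\<ge>K. lam ^ k * d < e"
proof -
  have "(\<lambda>k. lam ^ k * d) \<longlonglongrightarrow> 0"
    using LIMSEQ_power_zero[of lam] assms by (auto intro: tendsto_mult_left_zero)
  then obtain K where "\<forall>k\<ge>K. dist (lam ^ k * d) 0 < e" using assms(3) lim_sequentially by metis
  then show ?thesis by (metis abs_less_iff dist_real_def diff_zero)
qed

lemma omega_shadow:
  fixes f :: "'a::metric_space \<Rightarrow> 'a" and lam :: real
  assumes p: "p \<ge> 1" "(f ^^ p) y = y"
    and lam: "0 \<le> lam" "lam < 1"
    and d: "\<And>k. dist ((f ^^ (M + k)) x) ((f ^^ k) y) \<le> lam ^ k * d1"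
  shows "omega_limit f x = orbit f y"
proof
  show "omega_limit f x \<subseteq> orbit f y"
  proof
    fix z assume z: "z \<in> omega_limit f x"
    show "z \<in> orbit f y"
    proof (rule ccontr)
      assume nz: "z \<notin> orbit f y"
      obtain \<delta> where \<delta>: "\<delta> > 0" "\<forall>w\<in>orbit f y. w \<noteq> z \<longrightarrow> \<delta> \<le> dist z w"
        using finite_set_avoid[OF orbit_finite(2)[OF p]] by blast
      obtain K where K: "\<forall>k\<ge>K. lam ^ k * d1 < \<delta>/2" using pow_small[OF lam, where e="\<delta>/2" and d=d1] \<delta> by auto
      have "z \<in> closure (\<Union>n\<in>{M+K+1..}. {(f ^^ n) x})"
        using z unfolding omega_limit_def by auto
      then have "\<exists>y\<in>(\<Union>n\<in>{M+K+1..}. {(f ^^ n) x}). dist y z < \<delta>/2"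
        unfolding closure_approachable using \<delta>(1) by (meson half_gt_zero)
      then obtain n where n: "n \<ge> M+K+1" "dist ((f ^^ n) x) z < \<delta>/2"
        by auto
      define k where "k = n - M"
      have nk: "n = M + k" "k \<ge> K" using n unfolding k_def by auto
      have "dist ((f ^^ n) x) ((f ^^ k) y) < \<delta>/2" using d[of k] K nk by fastforce
      then have "dist z ((f ^^ k) y) < \<delta>" using n(2)
        by (metis dist_commute dist_triangle_half_l)
      moreover have "(f ^^ k) y \<in> orbit f y" unfolding orbit_def by auto
      ultimately show False using \<delta> nz by force
    qed
  qed
next
  show "orbit f y \<subseteq> omega_limit f x"
  proof
    fix w assume "w \<in> orbit f y"
    then obtain j where w: "w = (f ^^ j) y" unfolding orbit_def by auto
    show "w \<in> omega_limit f x"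
      unfolding omega_limit_def
    proof (rule InterI)
      fix T assume "T \<in> (\<lambda>m. closure (\<Union>n\<in>{m..}. {(f ^^ n) x})) ` {1..}"
      then obtain m where T: "T = closure (\<Union>n\<in>{m..}. {(f ^^ n) x})" by auto
      show "w \<in> T" unfolding T
        unfolding closure_approachable
      proof (intro allI impI)
        fix e :: real assume "e > 0"
        obtain K where K: "\<forall>k\<ge>K. lam ^ k * d1 < e" using pow_small[OF lam \<open>e>0\<close>, where d=d1] by auto
        define k where "k = (m + K) * p + j"
        have "k \<ge> K" unfolding k_def using p(1)
          by (metis add_leE le_add2 mult_le_mono2 nat_mult_1_right trans_le_add1)
        have "k \<ge> m" unfolding k_def using p(1)
          by (metis add_leE le_add2 mult_le_mono2 nat_mult_1_right trans_le_add1 add.commute)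
        have fk: "(f ^^ k) y = w" unfolding k_def w using funpow_period[OF p(2)] by simp
        have "dist ((f ^^ (M + k)) x) w < e" using d[of k] K \<open>k \<ge> K\<close> fk by fastforce
        moreover have "(f ^^ (M + k)) x \<in> (\<Union>n\<in>{m..}. {(f ^^ n) x})" using \<open>k \<ge> m\<close> by auto
        ultimately show "\<exists>y\<in>\<Union>n\<in>{m..}. {(f ^^ n) x}. dist y w < e" by blast
      qed
    qed
  qed
qed




locale loc_contr =
  fixes X V :: "'a::metric_space set" and f :: "'a \<Rightarrow> 'a" and eps lam :: real
  assumes X: "compact X" "f ` X \<subseteq> X"
    and V: "closed V" "V \<subseteq> X" and eps: "eps > 0" and lam: "0 \<le> lam" "lam < 1"
    and H1: "\<And>y z. y \<in> V \<Longrightarrow> z \<in> X \<Longrightarrow> dist y z < eps \<Longrightarrow> dist (f y) (f z) \<le> lam * dist y z"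
begin

lemma iter_contract:
  assumes "\<forall>k. (f ^^ k) y \<in> V" "z \<in> X" "dist y z < eps"
  shows "dist ((f ^^ k) y) ((f ^^ k) z) \<le> lam ^ k * dist y z"
proof (induction k)
  case 0 show ?case by simp
next
  case (Suc k)
  have le: "lam ^ k * dist y z \<le> dist y z"
    using lam by (simp add: mult_left_le_one_le power_le_one)
  have "dist ((f ^^ k) y) ((f ^^ k) z) < eps" using Suc le assms(3) by linarith
  then have "dist (f ((f ^^ k) y)) (f ((f ^^ k) z)) \<le> lam * dist ((f ^^ k) y) ((f ^^ k) z)"
    using H1 assms(1) funpow_in[OF X(2) assms(2)] by blast
  also have "\<dots> \<le> lam * (lam ^ k * dist y z)" using Suc lam by (simp add: mult_left_mono)
  finally show ?case by simp
qed

lemma cont_V: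
  assumes "y \<in> V" "\<And>k. zs k \<in> X" "zs \<longlonglongrightarrow> y"
  shows "(\<lambda>k. f (zs k)) \<longlonglongrightarrow> f y"
  unfolding lim_sequentially
proof (intro allI impI)
  fix e :: real assume e: "e > 0"
  obtain K where K: "\<forall>k\<ge>K. dist (zs k) y < min e eps"
    using assms(3) e eps unfolding lim_sequentially by (meson min_less_iff_conj)
  show "\<exists>K. \<forall>k\<ge>K. dist (f (zs k)) (f y) < e"
  proof (intro exI allI impI)
    fix k assume "k \<ge> K"
    then have d: "dist y (zs k) < min e eps" using K by (simp add: dist_commute)
    then have "dist (f y) (f (zs k)) \<le> lam * dist y (zs k)" using H1 assms by simp
    also have "\<dots> \<le> dist y (zs k)" using lam by (simp add: mult_left_le_one_le)
    finally show "dist (f (zs k)) (f y) < e" using d by (simp add: dist_commute)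
  qed
qed

definition P0 where "P0 = {y \<in> V. periodic_point f y \<and> (\<forall>k. (f ^^ k) y \<in> V)}"

lemma P0_sep:
  assumes "y \<in> P0" "z \<in> P0" "dist y z < eps"
  shows "y = z"
proof -
  obtain p where p: "p \<ge> 1" "(f ^^ p) y = y" using assms(1) unfolding P0_def periodic_point_def by auto
  obtain q where q: "q \<ge> 1" "(f ^^ q) z = z" using assms(2) unfolding P0_def periodic_point_def by auto
  have y: "(f ^^ (q*p)) y = y" using funpow_period[OF p(2), of q 0] by simp
  have z: "(f ^^ (q*p)) z = z" using funpow_period[OF q(2), of p 0] by (simp add: mult.commute)
  have "dist y z \<le> lam ^ (q*p) * dist y z"
    using iter_contract[of y z "q*p"] assms V(2) y z unfolding P0_def by auto
  moreover have "lam ^ (q*p) < 1"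
  proof -
    have "1 \<le> q*p" using p(1) q(1) by (simp add: one_le_mult_iff)
    then have "lam ^ (q*p) \<le> lam ^ 1" using lam by (intro power_decreasing) auto
    then show ?thesis using lam by simp
  qed
  ultimately have "dist y z \<le> 0"
  proof -
    assume le: "dist y z \<le> lam ^ (q * p) * dist y z" and lt: "lam ^ (q*p) < 1"
    show ?thesis
    proof (rule ccontr)
      assume "\<not> dist y z \<le> 0"
      then have "0 < dist y z" by simp
      then have "lam ^ (q*p) * dist y z < 1 * dist y z" by (rule mult_strict_right_mono[OF lt])
      then show False using le by simp
    qed
  qed
  then show ?thesis by simp
qed

lemma compact_V: "compact V"
  using compact_Int_closed[OF X(1) V(1)] V(2) by (simp add: Int_absorb1)

lemma P0_finite: "finite P0"
proof -
  have "V \<subseteq> (\<Union>c\<in>V. ball c (eps/2))" using eps by auto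
  then obtain C where C: "C \<subseteq> V" "finite C" "V \<subseteq> (\<Union>c\<in>C. ball c (eps/2))"
    using compactE_image[OF compact_V, of V "\<lambda>c. ball c (eps/2)"] by auto
  define g where "g y = (SOME c. c \<in> C \<and> y \<in> ball c (eps/2))" for y
  have g: "g y \<in> C \<and> y \<in> ball (g y) (eps/2)" if "y \<in> V" for y
  proof -
    have "\<exists>c. c \<in> C \<and> y \<in> ball c (eps/2)" using C(3) that by blast
    then show ?thesis unfolding g_def by (rule someI_ex)
  qed
  have "inj_on g P0"
  proof (rule inj_onI)
    fix y z assume yz: "y \<in> P0" "z \<in> P0" "g y = g z"
    then have "y \<in> V" "z \<in> V" unfolding P0_def by auto
    have "dist (g y) y < eps/2" using g[OF \<open>y \<in> V\<close>] by simp
    moreover have "dist (g y) z < eps/2" using g[OF \<open>z \<in> V\<close>] yz(3) by simp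
    ultimately have "dist y z < eps" by (metis dist_commute dist_triangle_half_l)
    then show "y = z" using P0_sep yz by auto
  qed
  moreover have "g ` P0 \<subseteq> C" using g unfolding P0_def by auto
  ultimately show ?thesis using inj_on_finite C(2) by blast
qed


lemma orbit_limit:
  assumes x: "x \<in> X" and ev: "\<forall>n\<ge>n0. (f ^^ n) x \<in> V"
  shows "\<exists>y\<in>P0. omega_limit f x = orbit f y"
proof -
  have xX: "(f ^^ n) x \<in> X" for n using funpow_in[OF X(2) x] .
  define u where "u k = (f ^^ (n0 + k)) x" for k
  have uV: "u k \<in> V" for k using ev unfolding u_def by simp
  obtain l r where lr: "l \<in> V" "strict_mono r" "(u \<circ> r) \<longlonglongrightarrow> l"
    using seq_compactE[OF compact_imp_seq_compact[OF compact_V], of u] uV by blast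
  obtain K where K: "\<forall>k\<ge>K. dist ((u \<circ> r) k) l < eps/2"
    using lr(3) eps unfolding lim_sequentially by (meson half_gt_zero)
  define a where "a = r K"
  define b where "b = r (Suc K)"
  have ab: "a < b" unfolding a_def b_def using lr(2) by (simp add: strict_mono_def)
  have dab: "dist (u a) (u b) < eps"
    using K[rule_format, of K] K[rule_format, of "Suc K"] unfolding a_def b_def
    by (simp add: dist_triangle_half_l)
  define m where "m = n0 + a"
  define p where "p = b - a"
  have p1: "p \<ge> 1" using ab unfolding p_def by simp
  have um: "u a = (f ^^ m) x" "u b = (f ^^ (m + p)) x"
    unfolding u_def m_def p_def using ab by simp_all
  define d0 where "d0 = dist ((f ^^ m) x) ((f ^^ (m + p)) x)"
  have d0: "d0 < eps" using dab um unfolding d0_def by simp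
  have C1: "dist ((f ^^ (m + k)) x) ((f ^^ (m + p + k)) x) \<le> lam ^ k * d0" for k
  proof -
    have "\<forall>j. (f ^^ j) ((f ^^ m) x) \<in> V"
      using ev unfolding m_def by (simp add: funpow_add_apply[symmetric])
    from iter_contract[OF this xX d0[unfolded d0_def]]
    show ?thesis unfolding d0_def by (simp add: funpow_add_apply[symmetric] add.commute)
  qed
  define w where "w k = (f ^^ (m + k * p)) x" for k
  have wV: "w k \<in> V" for k using ev unfolding w_def m_def by simp
  obtain ys s where ys: "ys \<in> V" "strict_mono s" "(w \<circ> s) \<longlonglongrightarrow> ys"
    using seq_compactE[OF compact_imp_seq_compact[OF compact_V], of w] wV by blast
  have claim: "(\<lambda>k. (f ^^ j) (w (s k))) \<longlonglongrightarrow> (f ^^ j) ys \<and> (f ^^ j) ys \<in> V" for j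
  proof (induction j)
    case 0 then show ?case using ys by (simp add: o_def)
  next
    case (Suc j)
    have lim: "(\<lambda>k. f ((f ^^ j) (w (s k)))) \<longlonglongrightarrow> f ((f ^^ j) ys)"
      using cont_V[of "(f ^^ j) ys" "\<lambda>k. (f ^^ j) (w (s k))"] Suc
      unfolding w_def by (simp add: xX funpow_add_apply[symmetric])
    have "(f ^^ Suc j) ys \<in> V"
    proof (rule closed_sequentially[OF V(1) _ ])
      show "(\<lambda>k. f ((f ^^ j) (w (s k)))) \<longlonglongrightarrow> (f ^^ Suc j) ys" using lim by simp
      fix k
      have eq: "f ((f ^^ j) (w (s k))) = (f ^^ (Suc j + (m + s k * p))) x"
        unfolding w_def by (simp add: funpow_add_apply)
      have "Suc j + (m + s k * p) \<ge> n0" unfolding m_def by simp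
      then have "(f ^^ (Suc j + (m + s k * p))) x \<in> V" using ev by blast
      then show "f ((f ^^ j) (w (s k))) \<in> V" by (simp only: eq)
    qed
    then show ?case using lim by simp
  qed
  have per: "(f ^^ p) ys = ys"
  proof -
    have L1: "(\<lambda>k. dist ((f ^^ p) (w (s k))) (w (s k))) \<longlonglongrightarrow> dist ((f ^^ p) ys) ys"
      using claim[of p] ys(3) by (intro tendsto_dist) (auto simp: o_def)
    have L2: "(\<lambda>k. lam ^ k * d0) \<longlonglongrightarrow> 0"
      using LIMSEQ_power_zero[of lam] lam by (auto intro: tendsto_mult_left_zero)
    have "dist ((f ^^ p) (w (s k))) (w (s k)) \<le> lam ^ k * d0" for k
    proof -
      have e: "(f ^^ p) ((f ^^ (m + s k * p)) x) = (f ^^ (m + p + s k * p)) x"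
        by (simp add: funpow_add_apply[symmetric] algebra_simps)
      have "dist ((f ^^ p) (w (s k))) (w (s k)) \<le> lam ^ (s k * p) * d0"
        using C1[of "s k * p"] unfolding w_def e by (simp add: dist_commute)
      also have "\<dots> \<le> lam ^ k * d0"
      proof -
        have "k \<le> s k * p" using seq_suble[OF ys(2), of k] p1
          by (metis le_trans mult.right_neutral mult_le_mono2)
        then have "lam ^ (s k * p) \<le> lam ^ k" using lam by (intro power_decreasing) auto
        moreover have "d0 \<ge> 0" unfolding d0_def by simp
        ultimately show ?thesis by (simp add: mult_right_mono)
      qed
      finally show ?thesis .
    qed
    then have "dist ((f ^^ p) ys) ys \<le> 0" using LIMSEQ_le[OF L1 L2] by blast
    then show ?thesis by simp
  qed
  have ysP: "ys \<in> P0" unfolding P0_def periodic_point_def using ys(1) per p1 claim by blast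
  obtain K2 where K2: "dist (w (s K2)) ys < eps"
    using ys(3) eps unfolding lim_sequentially by (metis o_apply order_refl)
  define M where "M = m + s K2 * p"
  have "dist ((f ^^ k) ys) ((f ^^ k) ((f ^^ M) x)) \<le> lam ^ k * dist ys ((f ^^ M) x)" for k
    using iter_contract[of ys "(f ^^ M) x" k] claim xX K2 unfolding w_def M_def
    by (simp add: dist_commute)
  moreover have "(f ^^ (M + k)) x = (f ^^ k) ((f ^^ M) x)" for k
    by (simp add: funpow_add_apply[symmetric] add.commute)
  ultimately have "dist ((f ^^ (M + k)) x) ((f ^^ k) ys) \<le> lam ^ k * dist ys ((f ^^ M) x)" for k
    by (simp add: dist_commute)
  then have "omega_limit f x = orbit f ys"
    by (rule omega_shadow[OF p1 per lam])
  then show ?thesis using ysP by blast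
qed

lemma abstract_ap:
  assumes Z: "Z \<subseteq> X" and H2: "\<And>x. x \<in> Z \<Longrightarrow> \<exists>n0. \<forall>n\<ge>n0. (f ^^ n) x \<in> V"
  shows "asymptotically_periodic_on f Z"
proof -
  define P where "P = {y \<in> P0. \<exists>x\<in>Z. omega_limit f x = orbit f y}"
  have "finite P" using P0_finite unfolding P_def by simp
  moreover have "\<forall>p\<in>P. periodic_point f p" unfolding P_def P0_def by auto
  moreover have "(\<Union>x\<in>Z. omega_limit f x) = (\<Union>p\<in>P. orbit f p)"
  proof
    show "(\<Union>x\<in>Z. omega_limit f x) \<subseteq> (\<Union>p\<in>P. orbit f p)"
    proof
      fix z assume "z \<in> (\<Union>x\<in>Z. omega_limit f x)"
      then obtain x where x: "x \<in> Z" "z \<in> omega_limit f x" by auto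
      obtain n0 where "\<forall>n\<ge>n0. (f ^^ n) x \<in> V" using H2[OF x(1)] by auto
      then obtain y where "y \<in> P0" "omega_limit f x = orbit f y"
        using orbit_limit[of x n0] x Z by auto
      then show "z \<in> (\<Union>p\<in>P. orbit f p)" using x unfolding P_def by auto
    qed
    show "(\<Union>p\<in>P. orbit f p) \<subseteq> (\<Union>x\<in>Z. omega_limit f x)"
      unfolding P_def by auto
  qed
  ultimately show ?thesis unfolding asymptotically_periodic_on_def by blast
qed

end



lemma comp_word_snoc: "comp_word \<phi> (\<alpha> @ [i]) x = \<phi> i (comp_word \<phi> \<alpha> x)"
  by (simp add: comp_word_def)

lemma comp_word_nil: "comp_word \<phi> [] x = x"
  by (simp add: comp_word_def)

lemma comp_word_in:
  assumes "set \<alpha> \<subseteq> {..<N}" "\<forall>i<N. \<phi> i ` X \<subseteq> X" "x \<in> X"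
  shows "comp_word \<phi> \<alpha> x \<in> X"
  using assms(1)
proof (induction \<alpha> rule: rev_induct)
  case Nil then show ?case using assms by (simp add: comp_word_nil)
next
  case (snoc i \<alpha>)
  then show ?case using assms(2) by (auto simp: comp_word_snoc)
qed

lemma comp_word_lip:
  fixes \<phi> :: "nat \<Rightarrow> 'a::metric_space \<Rightarrow> 'a"
  assumes "set \<alpha> \<subseteq> {..<N}" "\<forall>i<N. \<phi> i ` X \<subseteq> X" "\<forall>i<N. lam-lipschitz_on X (\<phi> i)"
    "x \<in> X" "y \<in> X" "0 \<le> lam"
  shows "dist (comp_word \<phi> \<alpha> x) (comp_word \<phi> \<alpha> y) \<le> lam ^ length \<alpha> * dist x y"
  using assms(1)
proof (induction \<alpha> rule: rev_induct)
  case Nil then show ?case by (simp add: comp_word_nil)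
next
  case (snoc i \<alpha>)
  have i: "i < N" and sa: "set \<alpha> \<subseteq> {..<N}" using snoc.prems by auto
  have "dist (comp_word \<phi> (\<alpha> @ [i]) x) (comp_word \<phi> (\<alpha> @ [i]) y)
      \<le> lam * dist (comp_word \<phi> \<alpha> x) (comp_word \<phi> \<alpha> y)"
    unfolding comp_word_snoc
    by (rule lipschitz_onD[OF assms(3)[rule_format, OF i]])
       (use comp_word_in[OF sa assms(2)] assms(4,5) in auto)
  also have "\<dots> \<le> lam * (lam ^ length \<alpha> * dist x y)"
    using snoc.IH[OF sa] assms(6) by (simp add: mult_left_mono)
  finally show ?case by simp
qed

lemma connected_in_piece:
  assumes C: "connected C" "C \<subseteq> (\<Union>i<N. A i)" "C \<subseteq> X" "w \<in> C"
    and op: "\<forall>i<N. openin (top_of_set X) (A i)"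
    and dj: "\<forall>i<N. \<forall>j<N. i \<noteq> j \<longrightarrow> A i \<inter> A j = {}"
  shows "\<exists>i<N. C \<subseteq> A i"
proof -
  obtain i where i: "i < N" "w \<in> A i" using C by auto
  obtain Oi where Oi: "open Oi" "A i = X \<inter> Oi" using op i(1) openin_open by metis
  define B where "B = \<Union>(A ` ({..<N} - {i}))"
  have "openin (top_of_set X) B" unfolding B_def
    by (rule openin_Union) (use op in auto)
  then obtain OB where OB: "open OB" "B = X \<inter> OB" using openin_open by metis
  have disj: "Oi \<inter> OB \<inter> C = {}"
  proof -
    have "Oi \<inter> OB \<inter> C \<subseteq> A i \<inter> B" using Oi OB C(3) by auto
    moreover have "A i \<inter> B = {}" unfolding B_def using dj i(1) by auto
    ultimately show ?thesis by blast
  qed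
  have cov: "C \<subseteq> Oi \<union> OB"
  proof
    fix c assume c: "c \<in> C"
    then obtain j where j: "j < N" "c \<in> A j" using C(2) by auto
    show "c \<in> Oi \<union> OB"
    proof (cases "j = i")
      case True then show ?thesis using j Oi by auto
    next
      case False then have "c \<in> B" unfolding B_def using j by auto
      then show ?thesis using OB by auto
    qed
  qed
  have "Oi \<inter> C = {} \<or> OB \<inter> C = {}" by (rule connectedD[OF C(1) Oi(1) OB(1) disj cov])
  moreover have "w \<in> Oi" using i Oi by auto
  ultimately have "C \<subseteq> Oi" using cov C(4) by blast
  then show ?thesis using i(1) Oi C(3) by auto
qed




lemma itinerary:
  assumes pc: "piecewise_contraction X lam N A \<phi> f"
    and x: "x \<in> regular_set X N A f"
  shows "\<exists>\<alpha>\<in>itin X N A f n. comp_word \<phi> \<alpha> x = (f ^^ n) x"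
proof -
  have fX: "f ` X \<subseteq> X" and eqf: "\<forall>i<N. \<forall>x\<in>A i. f x = \<phi> i x"
    using pc unfolding piecewise_contraction_def by auto
  have reg: "regular_of_order X N A f n x" for n using x unfolding regular_set_def by auto
  have xX: "x \<in> X" using reg[of 0] unfolding regular_of_order_def by auto
  have ex: "\<exists>i. i < N \<and> (f ^^ j) x \<in> A i" for j
  proof -
    have "(f ^^ j) x \<notin> sing_set X N A" using reg[of "Suc j"] unfolding regular_of_order_def by auto
    moreover have "(f ^^ j) x \<in> X" by (rule funpow_in[OF fX xX])
    ultimately show ?thesis unfolding sing_set_def by auto
  qed
  define it where "it j = (SOME i. i < N \<and> (f ^^ j) x \<in> A i)" for j
  have it: "it j < N \<and> (f ^^ j) x \<in> A (it j)" for j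
    unfolding it_def by (rule someI_ex[OF ex])
  define \<alpha> where "\<alpha> = map it [0..<n]"
  have "\<alpha> \<in> itin X N A f n"
    unfolding itin_def \<alpha>_def using it reg[of n] by (auto simp: nth_map)
  moreover have "comp_word \<phi> (map it [0..<k]) x = (f ^^ k) x" for k
  proof (induction k)
    case 0 then show ?case by (simp add: comp_word_nil)
  next
    case (Suc k)
    have "comp_word \<phi> (map it [0..<Suc k]) x = \<phi> (it k) ((f ^^ k) x)"
      using Suc by (simp add: comp_word_snoc)
    also have "\<dots> = (f ^^ Suc k) x"
    proof -
      have "f ((f ^^ k) x) = \<phi> (it k) ((f ^^ k) x)" using eqf it[of k] by (meson)
      then show ?thesis by simp
    qed
    finally show ?case .
  qed
  ultimately show ?thesis unfolding \<alpha>_def by blast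
qed

theorem lemma3p7:
  fixes X :: "'a::metric_space set" and lam :: real and N :: nat
    and A :: "nat \<Rightarrow> 'a set" and \<phi> :: "nat \<Rightarrow> 'a \<Rightarrow> 'a" and f :: "'a \<Rightarrow> 'a" and x0 :: 'a
  assumes "good_space X"
    and "0 < lam" and "lam < 1"
    and "piecewise_contraction X lam N A \<phi> f"
    and "x0 \<in> X"
    and "Omega_set X N A \<phi> f x0 \<inter> sing_set X N A = {}"
  shows "asymptotically_periodic_on f (regular_set X N A f)"
proof -
  note pc = assms(4)
  have cX: "compact X" and conn: "\<forall>x\<in>X. \<forall>r>0. connected (ball x r \<inter> X)"
    using assms(1) unfolding good_space_def by auto
  have fX: "f ` X \<subseteq> X" and op: "\<forall>i<N. openin (top_of_set X) (A i)"
    and dj: "\<forall>i<N. \<forall>j<N. i \<noteq> j \<longrightarrow> A i \<inter> A j = {}"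
    and phX: "\<forall>i<N. \<phi> i ` X \<subseteq> X" and lip: "\<forall>i<N. lam-lipschitz_on X (\<phi> i)"
    and eqf: "\<forall>i<N. \<forall>x\<in>A i. f x = \<phi> i x"
    using pc unfolding piecewise_contraction_def by auto
  have lam0: "0 \<le> lam" using assms(2) by simp
  have clX: "closed X" using cX by (rule compact_imp_closed)
  define S where "S = sing_set X N A"
  define \<Omega> where "\<Omega> = Omega_set X N A \<phi> f x0"
  define T where "T m = closure (\<Union>n\<in>{m..}. {comp_word \<phi> \<alpha> x0 | \<alpha>. \<alpha> \<in> itin X N A f n})" for m
  have \<Omega>T: "\<Omega> = (\<Inter>m\<in>{1..}. T m)" unfolding \<Omega>_def Omega_set_def T_def by (rule refl)
  have TX: "T m \<subseteq> X" for m
  proof -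
    have "comp_word \<phi> \<alpha> x0 \<in> X" if "\<alpha> \<in> itin X N A f n" for \<alpha> n
      using that comp_word_in[OF _ phX assms(5)] unfolding itin_def by blast
    then have "(\<Union>n\<in>{m..}. {comp_word \<phi> \<alpha> x0 | \<alpha>. \<alpha> \<in> itin X N A f n}) \<subseteq> X" by blast
    then show ?thesis unfolding T_def by (rule closure_minimal[OF _ clX])
  qed
  have Tmono: "T m \<subseteq> T k" if km: "k \<le> m" for k m
    unfolding T_def
  proof (rule closure_mono, rule subsetI)
    fix y assume "y \<in> (\<Union>n\<in>{m..}. {comp_word \<phi> \<alpha> x0 | \<alpha>. \<alpha> \<in> itin X N A f n})"
    then obtain n \<alpha> where n: "n \<ge> m" "\<alpha> \<in> itin X N A f n" "y = comp_word \<phi> \<alpha> x0" by blast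
    have "n \<in> {k..}" using n(1) km by simp
    then show "y \<in> (\<Union>n\<in>{k..}. {comp_word \<phi> \<alpha> x0 | \<alpha>. \<alpha> \<in> itin X N A f n})"
      using n(2,3) by blast
  qed
  have \<Omega>X: "\<Omega> \<subseteq> X" using \<Omega>T TX[of 1] by auto
  have cl\<Omega>: "closed \<Omega>" unfolding \<Omega>T T_def by (intro closed_INT) auto
  have c\<Omega>: "compact \<Omega>" using compact_Int_closed[OF cX cl\<Omega>] \<Omega>X by (simp add: Int_absorb1)
  have disj: "\<Omega> \<inter> S = {}" using assms(6) unfolding \<Omega>_def S_def .
  have E: "\<exists>m. \<forall>n\<ge>m. \<forall>\<alpha>\<in>itin X N A f n. \<exists>\<omega>\<in>\<Omega>. dist (comp_word \<phi> \<alpha> x0) \<omega> < \<delta>"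
    if \<delta>: "\<delta> > 0" for \<delta>
  proof -
    define U where "U = (\<Union>\<omega>\<in>\<Omega>. ball \<omega> \<delta>)"
    have oU: "open U" unfolding U_def by auto
    have \<Omega>U: "\<Omega> \<subseteq> U" unfolding U_def using \<delta> by auto
    have cs: "compact (X \<inter> - U)" using compact_Int_closed[OF cX] oU by (simp add: closed_Compl)
    have "\<exists>F'. finite F' \<and> F' \<subseteq> T ` {1..} \<and> (X \<inter> - U) \<inter> \<Inter>F' = {}"
    proof (rule ccontr)
      assume "\<nexists>F'. finite F' \<and> F' \<subseteq> T ` {1..} \<and> (X \<inter> - U) \<inter> \<Inter>F' = {}"
      note nF = this
      have "(X \<inter> - U) \<inter> \<Inter>(T ` {1..}) \<noteq> {}"
      proof (rule compact_imp_fip[OF cs])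
        show "closed G" if "G \<in> T ` {1..}" for G using that unfolding T_def by auto
        show "(X \<inter> - U) \<inter> \<Inter>F' \<noteq> {}" if "finite F'" "F' \<subseteq> T ` {1..}" for F'
          using nF that by blast
      qed
      then have "(X \<inter> - U) \<inter> \<Omega> \<noteq> {}" unfolding \<Omega>T .
      then show False using \<Omega>U by blast
    qed
    then obtain F' where F': "finite F'" "F' \<subseteq> T ` {1..}" "(X \<inter> - U) \<inter> \<Inter>F' = {}" by blast
    then obtain M' where M': "M' \<subseteq> {1..}" "finite M'" "F' = T ` M'"
      using finite_subset_image by metis
    define m where "m = Max (insert 1 M')"
    have "T m \<subseteq> \<Inter>F'"
    proof
      fix y assume y: "y \<in> T m"
      show "y \<in> \<Inter>F'"
      proof
        fix G assume "G \<in> F'"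
        then obtain k where k: "k \<in> M'" "G = T k" using M' by auto
        have "k \<le> m" unfolding m_def using k(1) M'(2) by simp
        then show "y \<in> G" using Tmono y k by auto
      qed
    qed
    then have TmU: "T m \<subseteq> U" using F'(3) TX[of m] by blast
    show ?thesis
    proof (intro exI allI impI ballI)
      fix n \<alpha> assume n: "m \<le> n" and \<alpha>: "\<alpha> \<in> itin X N A f n"
      have "comp_word \<phi> \<alpha> x0 \<in> T m" unfolding T_def
        using n \<alpha> closure_subset by fastforce
      then have "comp_word \<phi> \<alpha> x0 \<in> U" using TmU by blast
      then show "\<exists>\<omega>\<in>\<Omega>. dist (comp_word \<phi> \<alpha> x0) \<omega> < \<delta>" unfolding U_def
        by (auto simp: dist_commute)
    qed
  qed
  have clS: "closed S"
  proof -
    have "openin (top_of_set X) (\<Union>i<N. A i)" by (rule openin_Union) (use op in auto)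
    then have "closedin (top_of_set X) (X - (\<Union>i<N. A i))"
      using closedin_diff[OF closedin_topspace[of "top_of_set X"]] by simp
    then show ?thesis unfolding S_def sing_set_def using closedin_closed_trans clX by blast
  qed
  obtain \<rho> where \<rho>: "\<rho> > 0" "\<forall>\<omega>\<in>\<Omega>. \<forall>z\<in>S. \<rho> \<le> dist \<omega> z"
  proof (cases "\<Omega> = {} \<or> S = {}")
    case True then show ?thesis using that[of 1] by auto
  next
    case False
    have cont: "continuous_on \<Omega> (\<lambda>w. infdist w S)"
      by (intro continuous_on_infdist continuous_on_id)
    obtain a where a: "a \<in> \<Omega>" "\<forall>w\<in>\<Omega>. infdist a S \<le> infdist w S"
      using continuous_attains_inf[OF c\<Omega> _ cont] False by blast
    have "a \<notin> S" using a(1) disj by auto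
    then have pos: "infdist a S > 0" using infdist_pos_not_in_closed[OF clS] False by blast
    have "\<forall>\<omega>\<in>\<Omega>. \<forall>z\<in>S. infdist a S \<le> dist \<omega> z"
      using a(2) infdist_le order_trans by blast
    then show ?thesis using that[of "infdist a S"] pos by blast
  qed
  have piece: "\<exists>i<N. ball \<omega> \<rho> \<inter> X \<subseteq> A i" if \<omega>: "\<omega> \<in> \<Omega>" for \<omega>
  proof (rule connected_in_piece[OF _ _ _ _ op dj])
    show "connected (ball \<omega> \<rho> \<inter> X)" using conn \<omega> \<Omega>X \<rho>(1) by auto
    show "ball \<omega> \<rho> \<inter> X \<subseteq> X" by auto
    show "\<omega> \<in> ball \<omega> \<rho> \<inter> X" using \<omega> \<Omega>X \<rho>(1) by auto
    show "ball \<omega> \<rho> \<inter> X \<subseteq> (\<Union>i<N. A i)"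
    proof
      fix z assume z: "z \<in> ball \<omega> \<rho> \<inter> X"
      show "z \<in> (\<Union>i<N. A i)"
      proof (rule ccontr)
        assume "z \<notin> (\<Union>i<N. A i)"
        then have "z \<in> S" using z unfolding S_def sing_set_def by auto
        then show False using \<rho>(2) \<omega> z by force
      qed
    qed
  qed
  define r where "r = \<rho> / 4"
  have r: "r > 0" using \<rho> unfolding r_def by simp
  define Ur where "Ur = (\<Union>\<omega>\<in>\<Omega>. ball \<omega> r)"
  define V where "V = X \<inter> closure Ur"
  interpret lc: loc_contr X V f "\<rho>/2" lam
  proof
    show "compact X" "f ` X \<subseteq> X" "closed V" "V \<subseteq> X" "\<rho>/2 > 0" "0 \<le> lam" "lam < 1"
      using cX fX clX \<rho> assms(2,3) unfolding V_def by auto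
    fix y z assume y: "y \<in> V" and z: "z \<in> X" and yz: "dist y z < \<rho>/2"
    have "y \<in> closure Ur" using y unfolding V_def by blast
    then obtain u where u: "u \<in> Ur" "dist u y < r" using r unfolding closure_approachable by blast
    obtain \<omega> where \<omega>: "\<omega> \<in> \<Omega>" "dist \<omega> u < r" using u(1) unfolding Ur_def by auto
    have "dist \<omega> y < \<rho>" using \<omega>(2) u(2) dist_triangle[of \<omega> y u] using \<rho>(1) unfolding r_def by linarith
    moreover have "dist \<omega> z < \<rho>" using \<omega>(2) u(2) yz dist_triangle[of \<omega> z u] dist_triangle[of u z y]
      using \<rho>(1) unfolding r_def by linarith
    moreover obtain i where i: "i < N" "ball \<omega> \<rho> \<inter> X \<subseteq> A i" using piece[OF \<omega>(1)] by blast
    moreover have "y \<in> X" using y unfolding V_def by auto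
    ultimately have yA: "y \<in> A i" and zA: "z \<in> A i" using z by auto
    have "dist (f y) (f z) = dist (\<phi> i y) (\<phi> i z)" using eqf i(1) yA zA by simp
    also have "\<dots> \<le> lam * dist y z"
      using lipschitz_onD[OF lip[rule_format, OF i(1)]] \<open>y \<in> X\<close> z by blast
    finally show "dist (f y) (f z) \<le> lam * dist y z" .
  qed
  show ?thesis
  proof (rule lc.abstract_ap)
    show "regular_set X N A f \<subseteq> X"
      unfolding regular_set_def regular_of_order_def by blast
    fix x assume x: "x \<in> regular_set X N A f"
    have xX: "x \<in> X" using x unfolding regular_set_def regular_of_order_def by blast
    obtain m where m: "\<forall>n\<ge>m. \<forall>\<alpha>\<in>itin X N A f n. \<exists>\<omega>\<in>\<Omega>. dist (comp_word \<phi> \<alpha> x0) \<omega> < r/2"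
      using E[of "r/2"] r by auto
    obtain n1 where n1: "\<forall>k\<ge>n1. lam ^ k * diameter X < r/2"
      using pow_small[OF lam0 assms(3), of "r/2" "diameter X"] r by auto
    show "\<exists>n0. \<forall>n\<ge>n0. (f ^^ n) x \<in> V"
    proof (intro exI allI impI)
      fix n assume n: "max m n1 \<le> n"
      obtain \<alpha> where \<alpha>: "\<alpha> \<in> itin X N A f n" "comp_word \<phi> \<alpha> x = (f ^^ n) x"
        using itinerary[OF pc x] by blast
      obtain \<omega> where \<omega>: "\<omega> \<in> \<Omega>" "dist (comp_word \<phi> \<alpha> x0) \<omega> < r/2" using m n \<alpha>(1) by auto
      have sa: "set \<alpha> \<subseteq> {..<N}" "length \<alpha> = n" using \<alpha>(1) unfolding itin_def by auto
      have "dist (comp_word \<phi> \<alpha> x) (comp_word \<phi> \<alpha> x0) \<le> lam ^ n * dist x x0"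
        using comp_word_lip[OF sa(1) phX lip xX assms(5) lam0] sa(2) by simp
      also have "\<dots> \<le> lam ^ n * diameter X"
        using diameter_bounded_bound[OF compact_imp_bounded[OF cX] xX assms(5)] lam0
        by (simp add: mult_left_mono)
      also have "\<dots> < r/2" using n1 n by auto
      finally have "dist (comp_word \<phi> \<alpha> x) \<omega> < r" using \<omega>(2) dist_triangle[of "comp_word \<phi> \<alpha> x" \<omega> "comp_word \<phi> \<alpha> x0"]
        by linarith
      then have "dist ((f ^^ n) x) \<omega> < r" using \<alpha>(2) by simp
      then have "(f ^^ n) x \<in> Ur" unfolding Ur_def using \<omega>(1) by (auto simp: dist_commute)
      then show "(f ^^ n) x \<in> V" unfolding V_def using funpow_in[OF fX xX] closure_subset by blast
    qed
  qed
qed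


end
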